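(* Let $a>0$, $b>0$, let $p\in\mathbb{N}$, and let $\alpha,\beta,t$ be real numbers with $\alpha+\beta t>1$. Then \[ a\gamma + b\ln p + a\psi(\alpha+\beta t) - b\psi_p(\alpha+\beta t) > 0 . \]
   Context: $\gamma$ denotes the Euler–Mascheroni constant and $\psi(t)=\Gamma'(t)/\Gamma(t)$ is the digamma function for $t>0$, where $\Gamma$ is Euler's Gamma function. For $p\in\mathbb{N}$ and $t>0$, the $p$-Gamma function is $\Gamma_p(t)=\frac{p!\,p^t}{t(t+1)\cdots(t+p)}$, and $\psi_p(t)=\frac{d}{dt}\ln\Gamma_p(t)=\Gamma_p'(t)/\Gamma_p(t)$. *)

theory Defs
  imports "HOL-Analysis.Analysis"
begin

definition Gamma_p :: "nat \<Rightarrow> real \<Rightarrow> real" where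
  "Gamma_p p t = fact p * real p powr t / (\<Prod>k = 0..p. (t + real k))"

definition psi_p :: "nat \<Rightarrow> real \<Rightarrow> real" where
  "psi_p p t = deriv (\<lambda>s. ln (Gamma_p p s)) t"

end

theory Submission
  imports Defs
begin

lemma psi_p_eq:
  assumes "p \<ge> 1" "x > (0::real)"
  shows "psi_p p x = ln (real p) - (\<Sum>k=0..p. 1 / (x + real k))"
proof -
  define f where "f s = ln (fact p) + s * ln (real p) - (\<Sum>k=0..p. ln (s + real k))" for s :: real
  have d: "(f has_field_derivative (ln (real p) - (\<Sum>k=0..p. 1 / (x + real k)))) (at x)"
    unfolding f_def
    by (rule derivative_eq_intros refl | use assms in \<open>force\<close>)+
  have eq: "f s = ln (Gamma_p p s)" if "s \<in> {0<..}" for s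
  proof -
    have s: "s > 0" using that by simp
    have pos: "\<And>k. s + real k > 0" using s by simp
    have pp: "(\<Prod>k = 0..p. (s + real k)) > 0" using pos by (simp add: prod_pos)
    have "ln (Gamma_p p s) = ln (fact p * real p powr s) - ln (\<Prod>k = 0..p. (s + real k))"
      unfolding Gamma_p_def using pp assms by (subst ln_div) (simp_all add: less_imp_neq[OF pp, symmetric] del: prod_zero_iff)
    also have "ln (fact p * real p powr s) = ln (fact p) + s * ln (real p)"
      using assms by (subst ln_mult_pos) (auto simp: ln_powr)
    also have "ln (\<Prod>k = 0..p. (s + real k)) = (\<Sum>k=0..p. ln (s + real k))"
      using pos by (subst ln_prod) (auto, metis less_irrefl)
    finally show ?thesis unfolding f_def by simp
  qed
  have "((\<lambda>s. ln (Gamma_p p s)) has_field_derivative (ln (real p) - (\<Sum>k=0..p. 1 / (x + real k)))) (at x)"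
    by (rule has_field_derivative_transform_within_open[OF d, where S="{0<..}"]) (use assms eq in auto)
  then show ?thesis unfolding psi_p_def by (rule DERIV_imp_deriv)
qed

theorem lemma3p2:
  fixes a b \<alpha> \<beta> t :: real and p :: nat
  assumes "a > 0" and "b > 0" and "p \<ge> 1" and "\<alpha> + \<beta> * t > 1"
  shows "a * euler_mascheroni + b * ln (real p) + a * Digamma (\<alpha> + \<beta> * t)
           - b * psi_p p (\<alpha> + \<beta> * t) > 0"
proof -
  define x where "x = \<alpha> + \<beta> * t"
  have x: "x > 1" using assms x_def by simp
  have dg: "Digamma x > Digamma (1::real)" by (rule Digamma_real_strict_mono) (use x in auto)
  hence g: "euler_mascheroni + Digamma x > 0" by simp
  have s: "(\<Sum>k=0..p. 1 / (x + real k)) > 0"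
    by (rule sum_pos) (use x in auto)
  have "a * euler_mascheroni + b * ln (real p) + a * Digamma x - b * psi_p p x
        = a * (euler_mascheroni + Digamma x) + b * (\<Sum>k=0..p. 1 / (x + real k))"
    unfolding psi_p_eq[OF assms(3) order.strict_trans[OF zero_less_one x]] by (simp add: algebra_simps)
  also have "\<dots> > 0" using g s assms by (metis add_pos_pos mult_pos_pos)
  finally show ?thesis unfolding x_def .
qed

end
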